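(* Let $S$ be a Riemann surface with boundary and $\Gamma$ a connected finite oriented graph embedded in $S$ such that $\#h^{-1}(v)\ge1$ and $\#t^{-1}(v)\ge1$ for each vertex $v$. Let $D$ be an embedded disk in $S$ whose boundary $\mathrm{Bd}(D)$, with the orientation induced from $D$, is a path in $\Gamma$. If $\mathrm{Int}(D)\cap\Gamma\neq\emptyset$, then there exists a simple closed path of $\Gamma$ in $D$ not equal to $\mathrm{Bd}(D)$.
   Context: A Riemann surface with boundary is a compact oriented surface, possibly with boundary. An oriented graph $\Gamma=(V,E)$ has head and tail maps $h,t:E\to V$, and is viewed as a topological space. A path is a sequence of edges $e_1,\dots,e_n$ with $h(e_i)=t(e_{i+1})$; it is closed if $h(e_n)=t(e_1)$, and simple if it has no self-intersection. *)

theory Defs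
  imports "HOL-Analysis.Analysis" "HOL-Homology.Homology"
begin

definition surface_with_boundary :: "'a topology \<Rightarrow> bool" where
  "surface_with_boundary X \<longleftrightarrow> compact_space X \<and> Hausdorff_space X \<and>
     (\<forall>x\<in>topspace X. \<exists>U. openin X U \<and> x \<in> U \<and>
        (\<exists>W. openin (top_of_set {z::complex. Im z \<ge> 0}) W \<and>
             subtopology X U homeomorphic_space top_of_set W))"

definition manifold_interior :: "'a topology \<Rightarrow> 'a set" where
  "manifold_interior X = {x \<in> topspace X. \<exists>U. openin X U \<and> x \<in> U \<and>
        (\<exists>W::complex set. open W \<and> subtopology X U homeomorphic_space top_of_set W)}"

text \<open>Orientability via local homology: a locally consistent choice of generators
  of the local homology groups H_2(X, X - {x}) at interior points.\<close>
definition orientable_surface :: "'a topology \<Rightarrow> bool" where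
  "orientable_surface X \<longleftrightarrow>
     (\<exists>\<mu>. \<forall>x\<in>manifold_interior X.
        \<mu> x \<in> carrier (relative_homology_group 2 X (topspace X - {x})) \<and>
        (\<forall>a\<in>carrier (relative_homology_group 2 X (topspace X - {x})).
            \<exists>n::int. a = \<mu> x [^]\<^bsub>relative_homology_group 2 X (topspace X - {x})\<^esub> n) \<and>
        (\<exists>U. openin X U \<and> x \<in> U \<and> U \<subseteq> manifold_interior X \<and>
           (\<exists>c\<in>carrier (relative_homology_group 2 X (topspace X - U)).
              \<forall>y\<in>U. hom_induced 2 X (topspace X - U) X (topspace X - {y}) id c = \<mu> y)))"

definition riemann_surface_with_boundary :: "'a topology \<Rightarrow> bool" where
  "riemann_surface_with_boundary X \<longleftrightarrow> surface_with_boundary X \<and> orientable_surface X"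

text \<open>Finite oriented graph (V, E, h, t) embedded in X: vertex v sits at pos v, edge e is the
  image of eg e on [0,1], running from pos (t e) to pos (h e); arcs are injective on the open
  interval, their open parts avoid vertices and are pairwise disjoint.\<close>
definition embedded_graph ::
  "'a topology \<Rightarrow> 'v set \<Rightarrow> 'e set \<Rightarrow> ('e \<Rightarrow> 'v) \<Rightarrow> ('e \<Rightarrow> 'v) \<Rightarrow> ('v \<Rightarrow> 'a) \<Rightarrow> ('e \<Rightarrow> real \<Rightarrow> 'a) \<Rightarrow> bool"
  where
  "embedded_graph X V E h t pos eg \<longleftrightarrow>
     finite V \<and> finite E \<and> h ` E \<subseteq> V \<and> t ` E \<subseteq> V \<and>
     inj_on pos V \<and> pos ` V \<subseteq> topspace X \<and>
     (\<forall>e\<in>E. continuous_map (top_of_set {0..1}) X (eg e) \<and>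
        eg e 0 = pos (t e) \<and> eg e 1 = pos (h e) \<and>
        inj_on (eg e) {0<..<1} \<and> eg e ` {0<..<1} \<inter> pos ` V = {}) \<and>
     (\<forall>e\<in>E. \<forall>e'\<in>E. e \<noteq> e' \<longrightarrow> eg e ` {0<..<1} \<inter> eg e' ` {0<..<1} = {})"

definition edge_set :: "('e \<Rightarrow> real \<Rightarrow> 'a) \<Rightarrow> 'e \<Rightarrow> 'a set" where
  "edge_set eg e = eg e ` {0..1}"

definition graph_set :: "'v set \<Rightarrow> 'e set \<Rightarrow> ('v \<Rightarrow> 'a) \<Rightarrow> ('e \<Rightarrow> real \<Rightarrow> 'a) \<Rightarrow> 'a set" where
  "graph_set V E pos eg = pos ` V \<union> (\<Union>e\<in>E. edge_set eg e)"

definition graph_connected :: "'v set \<Rightarrow> 'e set \<Rightarrow> ('e \<Rightarrow> 'v) \<Rightarrow> ('e \<Rightarrow> 'v) \<Rightarrow> bool" where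
  "graph_connected V E h t \<longleftrightarrow>
     V \<noteq> {} \<and>
     (\<forall>u\<in>V. \<forall>v\<in>V. (u, v) \<in> ({(t e, h e) | e. e \<in> E} \<union> {(h e, t e) | e. e \<in> E})\<^sup>*)"

definition is_path :: "'e set \<Rightarrow> ('e \<Rightarrow> 'v) \<Rightarrow> ('e \<Rightarrow> 'v) \<Rightarrow> 'e list \<Rightarrow> bool" where
  "is_path E h t es \<longleftrightarrow> es \<noteq> [] \<and> set es \<subseteq> E \<and>
     (\<forall>i. Suc i < length es \<longrightarrow> h (es ! i) = t (es ! Suc i))"

definition is_closed_path :: "'e set \<Rightarrow> ('e \<Rightarrow> 'v) \<Rightarrow> ('e \<Rightarrow> 'v) \<Rightarrow> 'e list \<Rightarrow> bool" where
  "is_closed_path E h t es \<longleftrightarrow> is_path E h t es \<and> h (last es) = t (hd es)"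

definition is_simple_closed_path :: "'e set \<Rightarrow> ('e \<Rightarrow> 'v) \<Rightarrow> ('e \<Rightarrow> 'v) \<Rightarrow> 'e list \<Rightarrow> bool" where
  "is_simple_closed_path E h t es \<longleftrightarrow> is_closed_path E h t es \<and> distinct (map t es)"

definition path_set :: "('e \<Rightarrow> real \<Rightarrow> 'a) \<Rightarrow> 'e list \<Rightarrow> 'a set" where
  "path_set eg es = (\<Union>e\<in>set es. edge_set eg e)"

definition embedded_disk :: "'a topology \<Rightarrow> (complex \<Rightarrow> 'a) \<Rightarrow> bool" where
  "embedded_disk X \<phi> \<longleftrightarrow> embedding_map (top_of_set (cball 0 1)) X \<phi>"

text \<open>The boundary circle of the disk, traversed once counterclockwise (the orientation induced
  from the disk, parametrized through \<phi>), is the closed path es: the circle splits into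
  consecutive arcs [\<theta> i, \<theta> (i+1)] which are increasing reparametrizations of the edges es!i.\<close>
definition boundary_is_path ::
  "'e set \<Rightarrow> ('e \<Rightarrow> 'v) \<Rightarrow> ('e \<Rightarrow> 'v) \<Rightarrow> ('e \<Rightarrow> real \<Rightarrow> 'a) \<Rightarrow> (complex \<Rightarrow> 'a) \<Rightarrow> 'e list \<Rightarrow> bool"
  where
  "boundary_is_path E h t eg \<phi> es \<longleftrightarrow> is_closed_path E h t es \<and>
     (\<exists>\<theta>::nat \<Rightarrow> real. \<theta> (length es) = \<theta> 0 + 2 * pi \<and>
        (\<forall>i<length es. \<theta> i < \<theta> (Suc i) \<and>
           (\<exists>r. continuous_on {\<theta> i..\<theta> (Suc i)} r \<and> strict_mono_on {\<theta> i..\<theta> (Suc i)} r \<and>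
                r ` {\<theta> i..\<theta> (Suc i)} = {0..1} \<and>
                (\<forall>s\<in>{\<theta> i..\<theta> (Suc i)}. \<phi> (cis s) = eg (es ! i) (r s)))))"

end

theory Submission
  imports Defs
begin


lemma disk_basic:
  assumes "embedded_disk X \<phi>"
  shows "continuous_map (top_of_set (cball 0 1)) X \<phi>" "inj_on \<phi> (cball 0 1)"
    "\<phi> ` cball 0 1 \<subseteq> topspace X"
proof -
  have hm: "homeomorphic_map (top_of_set (cball 0 1)) (subtopology X (\<phi> ` cball 0 1)) \<phi>"
    using assms unfolding embedded_disk_def embedding_map_def by simp
  show c: "continuous_map (top_of_set (cball 0 1)) X \<phi>"
    using homeomorphic_imp_continuous_map[OF hm] continuous_map_from_subtopology_mono
    by (metis continuous_map_in_subtopology)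
  show "inj_on \<phi> (cball 0 1)" using homeomorphic_imp_injective_map[OF hm] by simp
  show "\<phi> ` cball 0 1 \<subseteq> topspace X" using c continuous_map_image_subset_topspace by fastforce
qed

lemma disk_closed:
  assumes "Hausdorff_space X" "embedded_disk X \<phi>"
  shows "closedin X (\<phi> ` cball 0 1)"
proof -
  have "compactin (top_of_set (cball (0::complex) 1)) (cball 0 1)"
    by (simp add: compactin_subtopology)
  then have "compactin X (\<phi> ` cball 0 1)" using image_compactin disk_basic(1)[OF assms(2)] by blast
  then show ?thesis using compactin_imp_closedin assms(1) by blast
qed

lemma disk_open:
  assumes "surface_with_boundary X" "embedded_disk X \<phi>"
  shows "openin X (\<phi> ` ball 0 1)"
proof -
  note b = disk_basic[OF assms(2)]
  have cb: "continuous_map (top_of_set (ball 0 1)) X \<phi>"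
    using b(1) continuous_map_from_subtopology_mono ball_subset_cball by blast
  show ?thesis
  proof (subst openin_subopen, intro ballI)
    fix x assume "x \<in> \<phi> ` ball 0 1"
    then obtain z where z: "z \<in> ball 0 1" "x = \<phi> z" by blast
    have xt: "x \<in> topspace X" using z b(3) by auto
    obtain U W where U: "openin X U" "x \<in> U" and W: "openin (top_of_set {z::complex. Im z \<ge> 0}) W"
      and hU: "subtopology X U homeomorphic_space top_of_set W"
      using assms(1) xt unfolding surface_with_boundary_def by meson
    obtain f g where fg: "homeomorphic_maps (subtopology X U) (top_of_set W) f g"
      using hU homeomorphic_space_def by blast
    have fc: "continuous_map (subtopology X U) (top_of_set W) f"
      and gf: "\<And>y. y \<in> U \<Longrightarrow> g (f y) = y"
      using fg U(1) openin_subset[OF U(1)] unfolding homeomorphic_maps_def by (auto simp: Int_absorb1)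
    define B where "B = {w \<in> ball 0 1. \<phi> w \<in> U}"
    have oB: "open B"
    proof -
      have "openin (top_of_set (ball 0 1)) {w \<in> topspace (top_of_set (ball 0 1)). \<phi> w \<in> U}"
        by (rule openin_continuous_map_preimage[OF cb U(1)])
      then have "openin (top_of_set (ball 0 1)) B"
        unfolding B_def topspace_euclidean_subtopology .
      then show ?thesis using openin_open_trans open_ball by blast
    qed
    have zB: "z \<in> B" using z U by (simp add: B_def)
    have cB: "continuous_map (top_of_set B) (subtopology X U) \<phi>"
    proof -
      have "B \<subseteq> ball 0 1" by (auto simp: B_def)
      then have "continuous_map (top_of_set B) X \<phi>"
        using continuous_map_from_subtopology_mono[OF cb] by blast
      moreover have "\<phi> ` topspace (top_of_set B) \<subseteq> U" by (auto simp: B_def)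
      ultimately show ?thesis by (auto simp add: continuous_map_in_subtopology)
    qed
    have cpsi: "continuous_map (top_of_set B) (top_of_set W) (f \<circ> \<phi>)"
      using continuous_map_compose[OF cB fc] .
    then have cpsi': "continuous_on B (f \<circ> \<phi>)" and psiW: "(f \<circ> \<phi>) ` B \<subseteq> W"
      by (auto simp: continuous_map_in_subtopology)
    have injf: "inj_on f U" using gf by (metis inj_on_inverseI)
    have injp: "inj_on (f \<circ> \<phi>) B"
    proof (rule inj_onI)
      fix u w assume "u \<in> B" "w \<in> B" "(f \<circ> \<phi>) u = (f \<circ> \<phi>) w"
      then have "\<phi> u = \<phi> w" using injf by (auto simp: B_def inj_on_def)
      moreover have "u \<in> cball 0 1" "w \<in> cball 0 1" using \<open>u \<in> B\<close> \<open>w \<in> B\<close> by (auto simp: B_def)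
      ultimately show "u = w" using b(2) by (meson inj_onD)
    qed
    have opsi: "open ((f \<circ> \<phi>) ` B)" using invariance_of_domain[OF cpsi' oB injp] .
    have opsiW: "openin (top_of_set W) ((f \<circ> \<phi>) ` B)"
      using opsi psiW unfolding openin_open by (intro exI[of _ "(f \<circ> \<phi>) ` B"]) auto
    have eq: "\<phi> ` B = {y \<in> topspace (subtopology X U). f y \<in> (f \<circ> \<phi>) ` B}"
    proof -
      have PU: "\<phi> ` B \<subseteq> U" by (auto simp: B_def)
      have UX: "U \<subseteq> topspace X" using openin_subset[OF U(1)] .
      have ts: "topspace (subtopology X U) = U" using UX by (simp add: Int_absorb1)
      show ?thesis unfolding ts
      proof (intro equalityI subsetI)
        fix y assume "y \<in> \<phi> ` B" then show "y \<in> {y \<in> U. f y \<in> (f \<circ> \<phi>) ` B}" using PU by auto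
      next
        fix y assume "y \<in> {y \<in> U. f y \<in> (f \<circ> \<phi>) ` B}"
        then obtain w where "y \<in> U" "w \<in> B" "f y = f (\<phi> w)" by auto
        moreover have "\<phi> w \<in> U" using \<open>w \<in> B\<close> PU by auto
        ultimately have "y = \<phi> w" using injf by (meson inj_onD)
        then show "y \<in> \<phi> ` B" using \<open>w \<in> B\<close> by auto
      qed
    qed
    have "openin (subtopology X U) (\<phi> ` B)"
      unfolding eq by (rule openin_continuous_map_preimage[OF fc opsiW])
    then have "openin X (\<phi> ` B)" using U(1) openin_trans_full by blast
    moreover have "\<phi> ` B \<subseteq> \<phi> ` ball 0 1" by (auto simp: B_def)
    ultimately show "\<exists>T. openin X T \<and> x \<in> T \<and> T \<subseteq> \<phi> ` ball 0 1" using zB z by blast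
  qed
qed


lemma interval_cover:
  fixes \<theta> :: "nat \<Rightarrow> real"
  shows "\<forall>i<n. \<theta> i \<le> \<theta> (Suc i) \<Longrightarrow> \<theta> 0 \<le> s \<Longrightarrow> s \<le> \<theta> n \<Longrightarrow> 0 < n \<Longrightarrow>
     \<exists>i<n. \<theta> i \<le> s \<and> s \<le> \<theta> (Suc i)"
proof (induction n)
  case 0 then show ?case by simp
next
  case (Suc n)
  show ?case
  proof (cases "n > 0 \<and> s \<le> \<theta> n")
    case True then show ?thesis using Suc by (metis less_SucI)
  next
    case False
    then have "\<theta> n \<le> s" using Suc.prems(2) by (cases "n = 0") auto
    then show ?thesis using Suc.prems(3) by blast
  qed
qed

lemma bd_edge_sphere:
  assumes "boundary_is_path E h t eg \<phi> bd" "i < length bd"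
  shows "edge_set eg (bd ! i) \<subseteq> \<phi> ` sphere 0 1"
proof -
  obtain \<theta> :: "nat \<Rightarrow> real" where th: "\<forall>i<length bd. \<theta> i < \<theta> (Suc i) \<and>
           (\<exists>r. continuous_on {\<theta> i..\<theta> (Suc i)} r \<and> strict_mono_on {\<theta> i..\<theta> (Suc i)} r \<and>
                r ` {\<theta> i..\<theta> (Suc i)} = {0..1} \<and>
                (\<forall>s\<in>{\<theta> i..\<theta> (Suc i)}. \<phi> (cis s) = eg (bd ! i) (r s)))"
    using assms(1) unfolding boundary_is_path_def by blast
  then obtain r where r: "r ` {\<theta> i..\<theta> (Suc i)} = {0..1}"
    "\<forall>s\<in>{\<theta> i..\<theta> (Suc i)}. \<phi> (cis s) = eg (bd ! i) (r s)" using assms(2) by blast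
  show ?thesis
  proof
    fix y assume "y \<in> edge_set eg (bd ! i)"
    then obtain x where x: "x \<in> {0..1}" "y = eg (bd ! i) x" by (auto simp: edge_set_def)
    then obtain s where s: "s \<in> {\<theta> i..\<theta> (Suc i)}" "x = r s" using r(1) by (metis imageE)
    then have "y = \<phi> (cis s)" using r(2) x by auto
    moreover have "cis s \<in> sphere 0 1" by simp
    ultimately show "y \<in> \<phi> ` sphere 0 1" by blast
  qed
qed

lemma sphere_covered:
  assumes "boundary_is_path E h t eg \<phi> bd"
  shows "\<phi> ` sphere 0 1 \<subseteq> path_set eg bd"
proof -
  obtain \<theta> :: "nat \<Rightarrow> real" where th0: "\<theta> (length bd) = \<theta> 0 + 2 * pi" and th: "\<forall>i<length bd. \<theta> i < \<theta> (Suc i) \<and>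
           (\<exists>r. continuous_on {\<theta> i..\<theta> (Suc i)} r \<and> strict_mono_on {\<theta> i..\<theta> (Suc i)} r \<and>
                r ` {\<theta> i..\<theta> (Suc i)} = {0..1} \<and>
                (\<forall>s\<in>{\<theta> i..\<theta> (Suc i)}. \<phi> (cis s) = eg (bd ! i) (r s)))"
    using assms(1) unfolding boundary_is_path_def by blast
  have n0: "0 < length bd" using assms unfolding boundary_is_path_def is_closed_path_def is_path_def by auto
  show ?thesis
  proof
    fix y assume "y \<in> \<phi> ` sphere 0 1"
    then obtain w where w: "cmod w = 1" "y = \<phi> w" by auto
    have wn: "w \<noteq> 0" using w by auto
    have wc: "w = cis (Arg w)" using cis_Arg[OF wn] w(1) by (simp add: sgn_eq)
    define a where "a = Arg w"
    define k where "k = floor ((a - \<theta> 0) / (2 * pi))"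
    define s where "s = a - 2 * pi * k"
    have k1: "real_of_int k \<le> (a - \<theta> 0) / (2 * pi)" unfolding k_def by linarith
    have k2: "(a - \<theta> 0) / (2 * pi) < real_of_int k + 1" unfolding k_def by linarith
    have s1: "\<theta> 0 \<le> s" using k1 pi_gt_zero unfolding s_def by (simp add: field_simps)
    have s2: "s \<le> \<theta> (length bd)" using k2 pi_gt_zero th0 unfolding s_def by (simp add: field_simps)
    have cs: "cis s = w"
    proof -
      have "cis s = cis a / cis (2 * pi * real_of_int k)" unfolding s_def by (rule cis_divide[symmetric])
      also have "\<dots> = cis a" by simp
      finally show ?thesis using wc a_def by simp
    qed
    obtain i where i: "i < length bd" "\<theta> i \<le> s" "s \<le> \<theta> (Suc i)"
      using interval_cover[of "length bd" \<theta> s] th s1 s2 n0 by (meson less_imp_le)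
    then obtain r where r: "r ` {\<theta> i..\<theta> (Suc i)} = {0..1}"
      "\<forall>s\<in>{\<theta> i..\<theta> (Suc i)}. \<phi> (cis s) = eg (bd ! i) (r s)" using th by blast
    have "y = eg (bd ! i) (r s)" using r(2) i w(2) cs by auto
    moreover have "r s \<in> {0..1}" using r(1) i by auto
    ultimately have "y \<in> edge_set eg (bd ! i)" by (auto simp: edge_set_def)
    then show "y \<in> path_set eg bd" using i(1) unfolding path_set_def by auto
  qed
qed


lemma cycle_gen:
  assumes "finite N" "N \<noteq> {}" "\<forall>v\<in>N. \<exists>u\<in>N. (u, v) \<in> Q"
  shows "\<exists>x. (x, x) \<in> (Q \<inter> N \<times> N)\<^sup>+"
proof (rule ccontr)
  assume na: "\<not> ?thesis"
  let ?Q = "Q \<inter> N \<times> N"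
  have "finite ?Q" by (rule finite_subset[OF Int_lower2 finite_cartesian_product[OF assms(1) assms(1)]])
  moreover have "acyclic ?Q" using na unfolding acyclic_def by blast
  ultimately have "wf ?Q" by (rule finite_acyclic_wf)
  moreover obtain x0 where "x0 \<in> N" using assms(2) by blast
  ultimately obtain v where v: "v \<in> N" "\<forall>y. (y, v) \<in> ?Q \<longrightarrow> y \<notin> N"
    unfolding wf_eq_minimal by blast
  then show False using assms(3) by blast
qed

lemma cycle_edge:
  assumes "finite N" "N \<noteq> {}" "\<forall>v\<in>N. \<exists>e\<in>IE. h e = v \<and> t e \<in> N"
  shows "\<exists>e\<in>IE. (h e, t e) \<in> {(t e, h e) | e. e \<in> IE}\<^sup>*"
proof -
  define R where "R = {(t e, h e) | e. e \<in> IE}"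
  have "\<forall>v\<in>N. \<exists>u\<in>N. (u, v) \<in> R"
  proof
    fix v assume "v \<in> N"
    then obtain e where "e \<in> IE" "h e = v" "t e \<in> N" using assms(3) by blast
    then show "\<exists>u\<in>N. (u, v) \<in> R" unfolding R_def by blast
  qed
  then obtain x where "(x, x) \<in> (R \<inter> N \<times> N)\<^sup>+" using cycle_gen[OF assms(1,2)] by blast
  then have "(x, x) \<in> R\<^sup>+" by (rule trancl_mono) auto
  then obtain z where z: "(x, z) \<in> R\<^sup>*" "(z, x) \<in> R" using tranclD2 by metis
  then obtain e where "e \<in> IE" "z = t e" "x = h e" unfolding R_def by blast
  then show ?thesis using z(1) unfolding R_def by blast
qed

lemma cycle_edge':
  assumes "finite N" "N \<noteq> {}" "\<forall>v\<in>N. \<exists>e\<in>IE. t e = v \<and> h e \<in> N"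
  shows "\<exists>e\<in>IE. (h e, t e) \<in> {(t e, h e) | e. e \<in> IE}\<^sup>*"
proof -
  define R where "R = {(t e, h e) | e. e \<in> IE}"
  have "\<forall>v\<in>N. \<exists>u\<in>N. (u, v) \<in> R\<inverse>"
  proof
    fix v assume "v \<in> N"
    then obtain e where "e \<in> IE" "t e = v" "h e \<in> N" using assms(3) by blast
    then show "\<exists>u\<in>N. (u, v) \<in> R\<inverse>" unfolding R_def by blast
  qed
  then obtain x where "(x, x) \<in> (R\<inverse> \<inter> N \<times> N)\<^sup>+" using cycle_gen[OF assms(1,2)] by blast
  then have "(x, x) \<in> (R\<inverse>)\<^sup>+" by (rule trancl_mono) auto
  then have "(x, x) \<in> R\<^sup>+" by (simp add: trancl_converse)
  then obtain z where z: "(x, z) \<in> R\<^sup>*" "(z, x) \<in> R" using tranclD2 by metis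
  then obtain e where "e \<in> IE" "z = t e" "x = h e" unfolding R_def by blast
  then show ?thesis using z(1) unfolding R_def by blast
qed
lemma walk_simple:
  assumes "(u, w) \<in> {(t e, h e) | e. e \<in> F}\<^sup>*"
  shows "\<exists>es. set es \<subseteq> F \<and> (es = [] \<longrightarrow> u = w) \<and>
     (es \<noteq> [] \<longrightarrow> is_path F h t es \<and> t (hd es) = u \<and> h (last es) = w) \<and>
     distinct (map t es) \<and> w \<notin> set (map t es)"
  using assms
proof (induction rule: converse_rtrancl_induct)
  case base
  then show ?case by (intro exI[of _ "[]"]) simp
next
  case (step u y)
  then obtain e where e: "e \<in> F" "t e = u" "h e = y" by blast
  from step.IH obtain es where es: "set es \<subseteq> F" "es = [] \<longrightarrow> y = w"
     "es \<noteq> [] \<longrightarrow> is_path F h t es \<and> t (hd es) = y \<and> h (last es) = w"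
     "distinct (map t es)" "w \<notin> set (map t es)" by blast
  show ?case
  proof (cases "u = w")
    case True then show ?thesis by (intro exI[of _ "[]"]) simp
  next
    case uw: False
    show ?thesis
    proof (cases "u \<in> set (map t es)")
      case True
      then obtain k where k: "k < length es" "t (es ! k) = u" by (auto simp: in_set_conv_nth)
      let ?d = "drop k es"
      have ne: "?d \<noteq> []" using k by simp
      have p: "is_path F h t es" "h (last es) = w" using es(3) k by auto
      have "is_path F h t ?d" using p(1) ne set_drop_subset[of k es]
        unfolding is_path_def by (auto simp: add.commute)
      moreover have "t (hd ?d) = u" using k by (simp add: hd_drop_conv_nth)
      moreover have "h (last ?d) = w" using p(2) k by simp
      moreover have "distinct (map t ?d)" using es(4) by (simp add: drop_map[symmetric] distinct_drop)
      moreover have "w \<notin> set (map t ?d)" using es(5) by (metis drop_map in_set_dropD)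
      moreover have "set ?d \<subseteq> F" using es(1) by (meson order.trans set_drop_subset)
      ultimately show ?thesis using ne by blast
    next
      case False
      have "is_path F h t (e # es)"
      proof (cases "es = []")
        case True then show ?thesis using e unfolding is_path_def by auto
      next
        case False
        then have p: "is_path F h t es" "t (hd es) = y" using es(3) by auto
        show ?thesis unfolding is_path_def
        proof (intro conjI allI impI)
          show "set (e # es) \<subseteq> F" using e es(1) by auto
        next
          fix i assume "Suc i < length (e # es)"
          then show "h ((e # es) ! i) = t ((e # es) ! Suc i)"
            using p e False unfolding is_path_def by (cases i) (auto simp: hd_conv_nth)
        qed simp
      qed
      moreover have "h (last (e # es)) = w" using es(2,3) e by auto
      ultimately show ?thesis using e es False uw by (intro exI[of _ "e # es"]) auto
    qed
  qed
qed

lemma comb_main: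
  fixes IV BV :: "'v set" and IE F E :: "'e set"
  assumes fin: "finite IV" and IEF: "IE \<subseteq> F" and FE: "F \<subseteq> E" and ne: "IE \<noteq> {}"
    and a: "\<forall>e\<in>IE. t e \<in> IV \<union> BV \<and> h e \<in> IV \<union> BV"
    and bin: "\<forall>v\<in>IV. \<exists>e\<in>IE. h e = v"
    and bout: "\<forall>v\<in>IV. \<exists>e\<in>IE. t e = v"
    and c: "\<forall>b\<in>BV. \<forall>b'\<in>BV. (b, b') \<in> {(t e, h e) | e. e \<in> F}\<^sup>*"
  shows "\<exists>es. is_simple_closed_path E h t es \<and> set es \<subseteq> F \<and> (\<exists>e\<in>IE. e \<in> set es)"
proof -
  define R where "R = {(t e, h e) | e. e \<in> F}"
  have RIE: "{(t e, h e) | e. e \<in> IE}\<^sup>* \<subseteq> R\<^sup>*" using IEF unfolding R_def by (intro rtrancl_mono) blast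
  have Redge: "\<And>e. e \<in> IE \<Longrightarrow> (t e, h e) \<in> R" using IEF unfolding R_def by blast
  have c': "\<forall>b\<in>BV. \<forall>b'\<in>BV. (b, b') \<in> R\<^sup>*" using c unfolding R_def .
  have "\<exists>e\<in>IE. (h e, t e) \<in> R\<^sup>*"
  proof (rule ccontr)
    assume nc: "\<not> ?thesis"
    obtain e0 where e0: "e0 \<in> IE" using ne by blast
    have A: "\<exists>b\<in>BV. (b, t e0) \<in> R\<^sup>*"
    proof (rule ccontr)
      assume nA: "\<not> ?thesis"
      define N where "N = {v\<in>IV. \<not>(\<exists>b\<in>BV. (b, v) \<in> R\<^sup>*)}"
      have "t e0 \<in> N" using nA a e0 unfolding N_def by blast
      moreover have "\<forall>v\<in>N. \<exists>e\<in>IE. h e = v \<and> t e \<in> N"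
      proof
        fix v assume v: "v \<in> N"
        then obtain e where e: "e \<in> IE" "h e = v" using bin N_def by blast
        have eR: "(t e, v) \<in> R" using Redge[OF e(1)] e(2) by simp
        have "t e \<in> N"
        proof -
          have "t e \<notin> BV" using v eR unfolding N_def by blast
          moreover have "\<not>(\<exists>b\<in>BV. (b, t e) \<in> R\<^sup>*)"
          proof
            assume "\<exists>b\<in>BV. (b, t e) \<in> R\<^sup>*"
            then obtain b where b: "b \<in> BV" "(b, t e) \<in> R\<^sup>*" by blast
            then have "(b, v) \<in> R\<^sup>*" using eR by (meson rtrancl_into_rtrancl)
            then show False using v b(1) unfolding N_def by blast
          qed
          ultimately show ?thesis using a e unfolding N_def by blast
        qed
        then show "\<exists>e\<in>IE. h e = v \<and> t e \<in> N" using e by blast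
      qed
      moreover have "finite N" using fin unfolding N_def by simp
      ultimately obtain e where "e \<in> IE" "(h e, t e) \<in> R\<^sup>*"
        using cycle_edge[of N IE h t] RIE by blast
      then show False using nc by blast
    qed
    have B: "\<exists>b\<in>BV. (h e0, b) \<in> R\<^sup>*"
    proof (rule ccontr)
      assume nB: "\<not> ?thesis"
      define N where "N = {v\<in>IV. \<not>(\<exists>b\<in>BV. (v, b) \<in> R\<^sup>*)}"
      have "h e0 \<in> N" using nB a e0 unfolding N_def by blast
      moreover have "\<forall>v\<in>N. \<exists>e\<in>IE. t e = v \<and> h e \<in> N"
      proof
        fix v assume v: "v \<in> N"
        then obtain e where e: "e \<in> IE" "t e = v" using bout N_def by blast
        have eR: "(v, h e) \<in> R" using Redge[OF e(1)] e(2) by simp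
        have "h e \<in> N"
        proof -
          have "h e \<notin> BV" using v eR unfolding N_def by blast
          moreover have "\<not>(\<exists>b\<in>BV. (h e, b) \<in> R\<^sup>*)"
          proof
            assume "\<exists>b\<in>BV. (h e, b) \<in> R\<^sup>*"
            then obtain b where b: "b \<in> BV" "(h e, b) \<in> R\<^sup>*" by blast
            then have "(v, b) \<in> R\<^sup>*" using eR by (meson converse_rtrancl_into_rtrancl)
            then show False using v b(1) unfolding N_def by blast
          qed
          ultimately show ?thesis using a e unfolding N_def by blast
        qed
        then show "\<exists>e\<in>IE. t e = v \<and> h e \<in> N" using e by blast
      qed
      moreover have "finite N" using fin unfolding N_def by simp
      ultimately obtain e where "e \<in> IE" "(h e, t e) \<in> R\<^sup>*"
        using cycle_edge'[of N IE t h] RIE by blast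
      then show False using nc by blast
    qed
    from A B obtain b b' where "b \<in> BV" "b' \<in> BV" "(b, t e0) \<in> R\<^sup>*" "(h e0, b') \<in> R\<^sup>*" by blast
    then have "(h e0, t e0) \<in> R\<^sup>*" using c' by (meson rtrancl_trans)
    then show False using nc e0 by blast
  qed
  then obtain e0 where e0: "e0 \<in> IE" "(h e0, t e0) \<in> R\<^sup>*" by blast
  then obtain es where es: "set es \<subseteq> F" "es = [] \<longrightarrow> h e0 = t e0"
     "es \<noteq> [] \<longrightarrow> is_path F h t es \<and> t (hd es) = h e0 \<and> h (last es) = t e0"
     "distinct (map t es)" "t e0 \<notin> set (map t es)"
    using walk_simple[of "h e0" "t e0" t h F] unfolding R_def by blast
  have e0F: "e0 \<in> F" using e0 IEF by blast
  have "is_path E h t (e0 # es)"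
  proof (cases "es = []")
    case True then show ?thesis using e0F FE unfolding is_path_def by auto
  next
    case False
    then have p: "is_path F h t es" "t (hd es) = h e0" using es(3) by auto
    show ?thesis unfolding is_path_def
    proof (intro conjI allI impI)
      show "set (e0 # es) \<subseteq> E" using e0F es(1) FE by auto
    next
      fix i assume "Suc i < length (e0 # es)"
      then show "h ((e0 # es) ! i) = t ((e0 # es) ! Suc i)"
        using p False unfolding is_path_def by (cases i) (auto simp: hd_conv_nth)
    qed simp
  qed
  moreover have "h (last (e0 # es)) = t (hd (e0 # es))" using es(2,3) by auto
  moreover have "distinct (map t (e0 # es))" using es(4,5) by simp
  ultimately show ?thesis using e0 e0F es(1)
    unfolding is_simple_closed_path_def is_closed_path_def by (intro exI[of _ "e0 # es"]) auto
qed


lemma tri01: "s \<in> {0..1::real} \<Longrightarrow> s = 0 \<or> s = 1 \<or> s \<in> {0<..<1}"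
  by auto

lemma card_ge1_ex: "1 \<le> card {e\<in>E. P e} \<Longrightarrow> \<exists>e\<in>E. P e"
  by (cases "{e\<in>E. P e} = {}") auto

theorem lemma3p14:
  fixes X :: "'a topology"
    and V :: "'v set" and E :: "'e set" and h t :: "'e \<Rightarrow> 'v"
    and pos :: "'v \<Rightarrow> 'a" and eg :: "'e \<Rightarrow> real \<Rightarrow> 'a"
    and \<phi> :: "complex \<Rightarrow> 'a" and bd :: "'e list"
  assumes "riemann_surface_with_boundary X"
    and "embedded_graph X V E h t pos eg"
    and "graph_connected V E h t"
    and "\<forall>v\<in>V. card {e\<in>E. h e = v} \<ge> 1 \<and> card {e\<in>E. t e = v} \<ge> 1"
    and "embedded_disk X \<phi>"
    and "boundary_is_path E h t eg \<phi> bd"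
    and "\<phi> ` ball 0 1 \<inter> graph_set V E pos eg \<noteq> {}"
  shows "\<exists>es. is_simple_closed_path E h t es \<and> path_set eg es \<subseteq> \<phi> ` cball 0 1 \<and>
              path_set eg es \<noteq> \<phi> ` sphere 0 1"
proof -
  have surf: "surface_with_boundary X" using assms(1) by (simp add: riemann_surface_with_boundary_def)
  have Haus: "Hausdorff_space X" using surf by (simp add: surface_with_boundary_def)
  note db = disk_basic[OF assms(5)]
  have opB: "openin X (\<phi> ` ball 0 1)" by (rule disk_open[OF surf assms(5)])
  have clC: "closedin X (\<phi> ` cball 0 1)" by (rule disk_closed[OF Haus assms(5)])
  have opC: "openin X (topspace X - \<phi> ` cball 0 1)" using clC by (simp add: closedin_def)
  have disj: "\<phi> ` ball 0 1 \<inter> \<phi> ` sphere 0 1 = {}"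
  proof -
    have "\<phi> ` ball 0 1 \<inter> \<phi> ` sphere 0 1 = \<phi> ` (ball 0 1 \<inter> sphere 0 1)"
      using db(2) by (intro inj_on_image_Int[symmetric]) auto
    then show ?thesis by auto
  qed
  have cballU: "\<phi> ` cball 0 1 = \<phi> ` ball 0 1 \<union> \<phi> ` sphere 0 1"
  proof -
    have "cball (0::complex) 1 = ball 0 1 \<union> sphere 0 1" by auto
    then show ?thesis by (simp add: image_Un)
  qed
  note G = assms(2)[unfolded embedded_graph_def]
  have finV: "finite V" and hV: "h ` E \<subseteq> V" and tV: "t ` E \<subseteq> V" and injpos: "inj_on pos V"
    using G by auto
  have egc: "\<And>e. e \<in> E \<Longrightarrow> continuous_map (top_of_set {0..1}) X (eg e)"
    and eg0: "\<And>e. e \<in> E \<Longrightarrow> eg e 0 = pos (t e)"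
    and eg1: "\<And>e. e \<in> E \<Longrightarrow> eg e 1 = pos (h e)"
    and egV: "\<And>e. e \<in> E \<Longrightarrow> eg e ` {0<..<1} \<inter> pos ` V = {}"
    and egd: "\<And>e e'. e \<in> E \<Longrightarrow> e' \<in> E \<Longrightarrow> e \<noteq> e' \<Longrightarrow> eg e ` {0<..<1} \<inter> eg e' ` {0<..<1} = {}"
    using G by auto
  note bp = assms(6)[unfolded boundary_is_path_def is_closed_path_def is_path_def]
  have bdE: "set bd \<subseteq> E" and bdne: "bd \<noteq> []"
    and bdch: "\<And>i. Suc i < length bd \<Longrightarrow> h (bd ! i) = t (bd ! Suc i)"
    and bdcl: "h (last bd) = t (hd bd)" using bp by auto
  have bdS: "\<And>e. e \<in> set bd \<Longrightarrow> edge_set eg e \<subseteq> \<phi> ` sphere 0 1"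
    using bd_edge_sphere[OF assms(6)] by (metis in_set_conv_nth)
  have Scov: "\<phi> ` sphere 0 1 \<subseteq> path_set eg bd" by (rule sphere_covered[OF assms(6)])
  define IV where "IV = {v\<in>V. pos v \<in> \<phi> ` ball 0 1}"
  define BV where "BV = t ` set bd"
  define IE where "IE = {e\<in>E. eg e ` {0<..<1} \<subseteq> \<phi> ` ball 0 1}"
  define F where "F = IE \<union> set bd"

  have hBV: "\<And>e. e \<in> set bd \<Longrightarrow> h e \<in> BV"
  proof -
    fix e assume "e \<in> set bd"
    then obtain i where i: "i < length bd" "e = bd ! i" by (metis in_set_conv_nth)
    show "h e \<in> BV"
    proof (cases "Suc i < length bd")
      case True then show ?thesis using i bdch unfolding BV_def by auto
    next
      case False
      then have "i = length bd - 1" using i by simp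
      then have "e = last bd" using i bdne by (simp add: last_conv_nth)
      then show ?thesis using bdcl bdne unfolding BV_def by auto
    qed
  qed
  have F7: "\<And>v. v \<in> V \<Longrightarrow> pos v \<in> \<phi> ` sphere 0 1 \<Longrightarrow> v \<in> BV"
  proof -
    fix v assume v: "v \<in> V" "pos v \<in> \<phi> ` sphere 0 1"
    then have "pos v \<in> path_set eg bd" using Scov by blast
    then obtain e s where e: "e \<in> set bd" "s \<in> {0..1}" "pos v = eg e s"
      unfolding path_set_def edge_set_def by blast
    have eE: "e \<in> E" using e bdE by blast
    consider "s = 0" | "s = 1" | "s \<in> {0<..<1}" using tri01[OF e(2)] by blast
    then show "v \<in> BV"
    proof cases
      case 1
      then have "v = t e" using e eg0[OF eE] injpos v(1) tV eE by (metis image_subset_iff inj_onD)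
      then show ?thesis using e unfolding BV_def by blast
    next
      case 2
      then have "v = h e" using e eg1[OF eE] injpos v(1) hV eE by (metis image_subset_iff inj_onD)
      then show ?thesis using hBV e by blast
    next
      case 3
      then show ?thesis using egV[OF eE] e v by blast
    qed
  qed
  have F2: "\<And>e. e \<in> E \<Longrightarrow> e \<notin> set bd \<Longrightarrow> eg e ` {0<..<1} \<inter> \<phi> ` sphere 0 1 = {}"
  proof -
    fix e assume eE: "e \<in> E" and nb: "e \<notin> set bd"
    show "eg e ` {0<..<1} \<inter> \<phi> ` sphere 0 1 = {}"
    proof (rule ccontr)
      assume "eg e ` {0<..<1} \<inter> \<phi> ` sphere 0 1 \<noteq> {}"
      then obtain p where p: "p \<in> eg e ` {0<..<1}" "p \<in> path_set eg bd" using Scov by blast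
      then obtain e' s where e': "e' \<in> set bd" "s \<in> {0..1}" "p = eg e' s"
        unfolding path_set_def edge_set_def by blast
      have e'E: "e' \<in> E" using e' bdE by blast
      consider "s = 0" | "s = 1" | "s \<in> {0<..<1}" using tri01[OF e'(2)] by blast
      then show False
      proof cases
        case 1 then have "p \<in> pos ` V" using e' eg0[OF e'E] tV e'E by auto
        then show False using egV[OF eE] p(1) by blast
      next
        case 2 then have "p \<in> pos ` V" using e' eg1[OF e'E] hV e'E by auto
        then show False using egV[OF eE] p(1) by blast
      next
        case 3
        have "e \<noteq> e'" using nb e' by blast
        then show False using egd[OF eE e'E] p(1) e' 3 by blast
      qed
    qed
  qed
  have conn: "\<And>e. e \<in> E \<Longrightarrow> connectedin X (eg e ` {0<..<1})"
  proof -
    fix e assume eE: "e \<in> E"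
    have "connectedin (top_of_set {0..1}) {0<..<(1::real)}"
      by (simp add: connectedin_subtopology greaterThanLessThan_subseteq_atLeastAtMost_iff)
    then show "connectedin X (eg e ` {0<..<1})"
      using connectedin_continuous_map_image[OF egc[OF eE]] by blast
  qed
  have F3: "\<And>e. e \<in> E \<Longrightarrow> e \<notin> set bd \<Longrightarrow> eg e ` {0<..<1} \<inter> \<phi> ` ball 0 1 \<noteq> {} \<Longrightarrow> e \<in> IE"
  proof -
    fix e assume eE: "e \<in> E" and nb: "e \<notin> set bd" and ne: "eg e ` {0<..<1} \<inter> \<phi> ` ball 0 1 \<noteq> {}"
    let ?O = "eg e ` {0<..<1}"
    have Ot: "?O \<subseteq> topspace X" using connectedin_subset_topspace[OF conn[OF eE]] .
    have sub: "?O \<subseteq> \<phi> ` ball 0 1 \<union> (topspace X - \<phi> ` cball 0 1)"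
    proof
      fix y assume y: "y \<in> ?O"
      have yt: "y \<in> topspace X" using y Ot by (rule subsetD[rotated])
      have ys: "y \<notin> \<phi> ` sphere 0 1" using y F2[OF eE nb] by (simp add: disjoint_iff)
      show "y \<in> \<phi> ` ball 0 1 \<union> (topspace X - \<phi> ` cball 0 1)"
      proof (cases "y \<in> \<phi> ` cball 0 1")
        case True then show ?thesis using ys cballU by simp
      next
        case False then show ?thesis using yt by simp
      qed
    qed
    have dis: "\<phi> ` ball 0 1 \<inter> (topspace X - \<phi> ` cball 0 1) \<inter> ?O = {}"
      using image_mono[OF ball_subset_cball, of \<phi> 0 1] by blast
    have ne': "\<phi> ` ball 0 1 \<inter> ?O \<noteq> {}" using ne by (simp add: Int_commute)
    have emp: "(topspace X - \<phi> ` cball 0 1) \<inter> ?O = {}"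
    proof (rule ccontr)
      assume "(topspace X - \<phi> ` cball 0 1) \<inter> ?O \<noteq> {}"
      then show False using connectedinD[OF conn[OF eE] opB opC sub dis ne'] by simp
    qed
    have "?O \<subseteq> \<phi> ` ball 0 1"
    proof
      fix y assume "y \<in> ?O"
      then show "y \<in> \<phi> ` ball 0 1" using sub emp by blast
    qed
    then show "e \<in> IE" using eE unfolding IE_def by blast
  qed
  have bdnotB: "\<And>e. e \<in> set bd \<Longrightarrow> pos (t e) \<notin> \<phi> ` ball 0 1 \<and> pos (h e) \<notin> \<phi> ` ball 0 1"
  proof -
    fix e assume e: "e \<in> set bd"
    then have eE: "e \<in> E" using bdE by blast
    have "eg e 0 \<in> edge_set eg e" "eg e 1 \<in> edge_set eg e" by (auto simp: edge_set_def)
    then have "pos (t e) \<in> \<phi> ` sphere 0 1" "pos (h e) \<in> \<phi> ` sphere 0 1"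
      using bdS[OF e] eg0[OF eE] eg1[OF eE] by auto
    then show "pos (t e) \<notin> \<phi> ` ball 0 1 \<and> pos (h e) \<notin> \<phi> ` ball 0 1"
      using disj by (auto simp: disjoint_iff)
  qed
  have F5t: "\<And>e. e \<in> E \<Longrightarrow> pos (t e) \<in> \<phi> ` ball 0 1 \<Longrightarrow> e \<in> IE"
  proof -
    fix e assume eE: "e \<in> E" and tin: "pos (t e) \<in> \<phi> ` ball 0 1"
    have nb: "e \<notin> set bd" using bdnotB tin by blast
    define P where "P = {s \<in> topspace (top_of_set {0..1::real}). eg e s \<in> \<phi> ` ball 0 1}"
    have op: "openin (top_of_set {0..1}) P" unfolding P_def
      by (rule openin_continuous_map_preimage[OF egc[OF eE] opB])
    have P01: "P \<subseteq> {0..1}" unfolding P_def by auto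
    have pP: "0 \<in> P" using tin eg0[OF eE] unfolding P_def by simp
    have "\<forall>x\<in>P. \<exists>e>0. \<forall>x'\<in>{0..1}. dist x' x < e \<longrightarrow> x' \<in> P"
      using op unfolding openin_euclidean_subtopology_iff by (rule conjunct2)
    from bspec[OF this pP] obtain d where d: "d > 0" "\<forall>x'\<in>{0..1}. dist x' 0 < d \<longrightarrow> x' \<in> P"
      by blast
    define s where "s = min (d/2) (1/2)"
    have s1: "s \<in> {0<..<1}" unfolding s_def using d(1) by (simp add: min_def)
    have s2: "s \<in> {0..1}" using s1 by simp
    have s3: "dist s 0 < d" unfolding s_def using d(1) by (simp add: dist_real_def min_def)
    have "s \<in> P" using d(2) s2 s3 by blast
    then have "eg e s \<in> \<phi> ` ball 0 1" unfolding P_def by simp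
    then have "eg e ` {0<..<1} \<inter> \<phi> ` ball 0 1 \<noteq> {}" using s1 by blast
    then show "e \<in> IE" using F3[OF eE nb] by blast
  qed
  have F5h: "\<And>e. e \<in> E \<Longrightarrow> pos (h e) \<in> \<phi> ` ball 0 1 \<Longrightarrow> e \<in> IE"
  proof -
    fix e assume eE: "e \<in> E" and tin: "pos (h e) \<in> \<phi> ` ball 0 1"
    have nb: "e \<notin> set bd" using bdnotB tin by blast
    define P where "P = {s \<in> topspace (top_of_set {0..1::real}). eg e s \<in> \<phi> ` ball 0 1}"
    have op: "openin (top_of_set {0..1}) P" unfolding P_def
      by (rule openin_continuous_map_preimage[OF egc[OF eE] opB])
    have P01: "P \<subseteq> {0..1}" unfolding P_def by auto
    have pP: "1 \<in> P" using tin eg1[OF eE] unfolding P_def by simp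
    have "\<forall>x\<in>P. \<exists>e>0. \<forall>x'\<in>{0..1}. dist x' x < e \<longrightarrow> x' \<in> P"
      using op unfolding openin_euclidean_subtopology_iff by (rule conjunct2)
    from bspec[OF this pP] obtain d where d: "d > 0" "\<forall>x'\<in>{0..1}. dist x' 1 < d \<longrightarrow> x' \<in> P"
      by blast
    define s where "s = 1 - min (d/2) (1/2)"
    have s1: "s \<in> {0<..<1}" unfolding s_def using d(1) by (simp add: min_def)
    have s2: "s \<in> {0..1}" using s1 by simp
    have s3: "dist s 1 < d" unfolding s_def using d(1) by (simp add: dist_real_def min_def)
    have "s \<in> P" using d(2) s2 s3 by blast
    then have "eg e s \<in> \<phi> ` ball 0 1" unfolding P_def by simp
    then have "eg e ` {0<..<1} \<inter> \<phi> ` ball 0 1 \<noteq> {}" using s1 by blast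
    then show "e \<in> IE" using F3[OF eE nb] by blast
  qed
  have F6: "\<And>e. e \<in> IE \<Longrightarrow> edge_set eg e \<subseteq> \<phi> ` cball 0 1"
  proof -
    fix e assume eI: "e \<in> IE"
    then have eE: "e \<in> E" and Osub: "eg e ` {0<..<1} \<subseteq> \<phi> ` ball 0 1" unfolding IE_def by auto
    have "closedin (top_of_set {0..1}) {s \<in> topspace (top_of_set {0..1}). eg e s \<in> \<phi> ` cball 0 1}"
      by (rule closedin_continuous_map_preimage[OF egc[OF eE] clC])
    then have "closedin (top_of_set {0..1}) {s \<in> {0..1::real}. eg e s \<in> \<phi> ` cball 0 1}" by simp
    then have cl: "closed {s \<in> {0..1::real}. eg e s \<in> \<phi> ` cball 0 1}"
      using closedin_closed_trans closed_atLeastAtMost by blast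
    have "{0<..<1::real} \<subseteq> {s \<in> {0..1::real}. eg e s \<in> \<phi> ` cball 0 1}"
      using Osub by auto
    then have "closure {0<..<1::real} \<subseteq> {s \<in> {0..1::real}. eg e s \<in> \<phi> ` cball 0 1}"
      using cl by (rule closure_minimal)
    then have "{0..1::real} \<subseteq> {s \<in> {0..1::real}. eg e s \<in> \<phi> ` cball 0 1}" by simp
    then show "edge_set eg e \<subseteq> \<phi> ` cball 0 1" unfolding edge_set_def by blast
  qed
  have FC: "\<And>e. e \<in> F \<Longrightarrow> edge_set eg e \<subseteq> \<phi> ` cball 0 1"
  proof -
    fix e assume "e \<in> F"
    then consider "e \<in> IE" | "e \<in> set bd" unfolding F_def by blast
    then show "edge_set eg e \<subseteq> \<phi> ` cball 0 1"
    proof cases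
      case 1 then show ?thesis using F6 by blast
    next
      case 2 then show ?thesis using bdS[OF 2] cballU by blast
    qed
  qed
  have a: "\<forall>e\<in>IE. t e \<in> IV \<union> BV \<and> h e \<in> IV \<union> BV"
  proof
    fix e assume eI: "e \<in> IE"
    then have eE: "e \<in> E" unfolding IE_def by auto
    have "eg e 0 \<in> edge_set eg e" "eg e 1 \<in> edge_set eg e" by (auto simp: edge_set_def)
    then have "pos (t e) \<in> \<phi> ` cball 0 1" "pos (h e) \<in> \<phi> ` cball 0 1"
      using F6[OF eI] eg0[OF eE] eg1[OF eE] by auto
    moreover have "t e \<in> V" "h e \<in> V" using eE tV hV by auto
    ultimately show "t e \<in> IV \<union> BV \<and> h e \<in> IV \<union> BV"
      using F7 cballU unfolding IV_def by blast
  qed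
  have bin: "\<forall>v\<in>IV. \<exists>e\<in>IE. h e = v"
  proof
    fix v assume v: "v \<in> IV"
    then have "card {e\<in>E. h e = v} \<ge> 1" using assms(4) unfolding IV_def by auto
    then obtain e where "e \<in> E" "h e = v" using card_ge1_ex[of E "\<lambda>e. h e = v"] by blast
    then show "\<exists>e\<in>IE. h e = v" using F5h v unfolding IV_def by blast
  qed
  have bout: "\<forall>v\<in>IV. \<exists>e\<in>IE. t e = v"
  proof
    fix v assume v: "v \<in> IV"
    then have "card {e\<in>E. t e = v} \<ge> 1" using assms(4) unfolding IV_def by auto
    then obtain e where "e \<in> E" "t e = v" using card_ge1_ex[of E "\<lambda>e. t e = v"] by blast
    then show "\<exists>e\<in>IE. t e = v" using F5t v unfolding IV_def by blast
  qed
  have c: "\<forall>b\<in>BV. \<forall>b'\<in>BV. (b, b') \<in> {(t e, h e) | e. e \<in> F}\<^sup>*"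
  proof -
    define R where "R = {(t e, h e) | e. e \<in> F}"
    have step: "\<And>i. i < length bd \<Longrightarrow> (t (bd ! i), h (bd ! i)) \<in> R"
    proof -
      fix i assume "i < length bd"
      then have "bd ! i \<in> F" unfolding F_def by simp
      then show "(t (bd ! i), h (bd ! i)) \<in> R" unfolding R_def by blast
    qed
    have up: "\<And>j i. i \<le> j \<Longrightarrow> j < length bd \<Longrightarrow> (t (bd ! i), t (bd ! j)) \<in> R\<^sup>*"
    proof -
      fix j i show "i \<le> j \<Longrightarrow> j < length bd \<Longrightarrow> (t (bd ! i), t (bd ! j)) \<in> R\<^sup>*"
      proof (induction j)
        case 0 then show ?case by simp
      next
        case (Suc j)
        show ?case
        proof (cases "i = Suc j")
          case True then show ?thesis by simp
        next
          case False
          then have "(t (bd ! i), t (bd ! j)) \<in> R\<^sup>*" using Suc by auto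
          moreover have "(t (bd ! j), t (bd ! Suc j)) \<in> R" using step[of j] bdch[of j] Suc.prems by simp
          ultimately show ?thesis by (meson rtrancl_into_rtrancl)
        qed
      qed
    qed
    have wrap: "\<And>j. j < length bd \<Longrightarrow> (t (bd ! j), t (bd ! 0)) \<in> R\<^sup>*"
    proof -
      fix j assume j: "j < length bd"
      let ?n = "length bd - 1"
      have n: "?n < length bd" using bdne by simp
      have "(t (bd ! j), t (bd ! ?n)) \<in> R\<^sup>*" using up[of j ?n] j n by simp
      moreover have "(t (bd ! ?n), h (bd ! ?n)) \<in> R" using step[OF n] .
      moreover have "h (bd ! ?n) = t (bd ! 0)" using bdcl bdne by (simp add: last_conv_nth hd_conv_nth)
      ultimately show "(t (bd ! j), t (bd ! 0)) \<in> R\<^sup>*" by (metis rtrancl_into_rtrancl)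
    qed
    show ?thesis unfolding R_def[symmetric]
    proof (intro ballI)
      fix b b' assume bb: "b \<in> BV" "b' \<in> BV"
      obtain x y where xy: "x \<in> set bd" "y \<in> set bd" "b = t x" "b' = t y" using bb unfolding BV_def by blast
      obtain i where i: "i < length bd" "x = bd ! i" using xy(1) by (metis in_set_conv_nth)
      obtain j where j: "j < length bd" "y = bd ! j" using xy(2) by (metis in_set_conv_nth)
      have ij: "i < length bd" "j < length bd" "b = t (bd ! i)" "b' = t (bd ! j)" using i j xy by auto
      have "(b, t (bd ! 0)) \<in> R\<^sup>*" using wrap ij by simp
      moreover have "(t (bd ! 0), b') \<in> R\<^sup>*" using up[of 0 j] ij by simp
      ultimately show "(b, b') \<in> R\<^sup>*" by (rule rtrancl_trans)
    qed
  qed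
  have ne: "IE \<noteq> {}"
  proof -
    obtain p where p: "p \<in> \<phi> ` ball 0 1" "p \<in> graph_set V E pos eg" using assms(7) by blast
    have vcase: "\<And>v. v \<in> V \<Longrightarrow> pos v \<in> \<phi> ` ball 0 1 \<Longrightarrow> IE \<noteq> {}"
    proof -
      fix v assume v: "v \<in> V" "pos v \<in> \<phi> ` ball 0 1"
      then have "card {e\<in>E. t e = v} \<ge> 1" using assms(4) by auto
      then obtain e where "e \<in> E" "t e = v" using card_ge1_ex[of E "\<lambda>e. t e = v"] by blast
      then show "IE \<noteq> {}" using F5t v by blast
    qed
    from p(2) consider (v) "p \<in> pos ` V" | (e) e s where "e \<in> E" "s \<in> {0..1}" "p = eg e s"
      unfolding graph_set_def edge_set_def by blast
    then show ?thesis
    proof cases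
      case v then show ?thesis using vcase p(1) by blast
    next
      case (e e s)
      consider "s = 0" | "s = 1" | "s \<in> {0<..<1}" using tri01[OF e(2)] by blast
      then show ?thesis
      proof cases
        case 1
        have "p = pos (t e)" using 1 e(3) eg0[OF e(1)] by simp
        moreover have "t e \<in> V" using tV e(1) by blast
        ultimately show ?thesis using vcase p(1) by blast
      next
        case 2
        have "p = pos (h e)" using 2 e(3) eg1[OF e(1)] by simp
        moreover have "h e \<in> V" using hV e(1) by blast
        ultimately show ?thesis using vcase p(1) by blast
      next
        case 3
        have nb: "e \<notin> set bd"
        proof
          assume "e \<in> set bd"
          then have "p \<in> \<phi> ` sphere 0 1" using bdS e(2,3) unfolding edge_set_def by blast
          then show False using p(1) disj by blast
        qed
        have "eg e ` {0<..<1} \<inter> \<phi> ` ball 0 1 \<noteq> {}" using 3 e p(1) by blast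
        then show ?thesis using F3[OF e(1) nb] by blast
      qed
    qed
  qed
  have finIV: "finite IV" using finV unfolding IV_def by simp
  have IEF: "IE \<subseteq> F" and FE: "F \<subseteq> E" using bdE unfolding F_def IE_def by auto
  obtain es where es: "is_simple_closed_path E h t es" "set es \<subseteq> F" "\<exists>e\<in>IE. e \<in> set es"
    using comb_main[OF finIV IEF FE ne a bin bout c] by blast
  have "path_set eg es \<subseteq> \<phi> ` cball 0 1" using FC es(2) unfolding path_set_def by blast
  moreover have "path_set eg es \<noteq> \<phi> ` sphere 0 1"
  proof
    assume eq: "path_set eg es = \<phi> ` sphere 0 1"
    obtain e where e: "e \<in> IE" "e \<in> set es" using es(3) by blast
    have "eg e (1/2) \<in> \<phi> ` ball 0 1" using e(1) unfolding IE_def by auto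
    moreover have "eg e (1/2) \<in> edge_set eg e" unfolding edge_set_def by auto
    then have "eg e (1/2) \<in> path_set eg es" using e(2) unfolding path_set_def by blast
    ultimately show False using eq disj by blast
  qed
  ultimately show ?thesis using es(1) by blast
qed
end
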